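(* Let $(x_c,y_c,\theta_c)\in\mathbb{R}^2\times\mathbb{S}$ and $t_g>0$, and assume there exists an optimal trajectory $(x(t),y(t),\theta(t))$, $t\in[0,t_g]$, of the MECP with duration $t_g$ such that $(x(0),y(0),\theta(0))=(x_c,y_c,\theta_c)$ and $(x(t_g),y(t_g),\theta(t_g))=(0,0,-\pi/2)$. Then for any $T>0$, $$u^*(t_g,x_c,y_c,\theta_c)=\frac{T}{t_g}\,u^*\!\left(T,\frac{T}{t_g}x_c,\frac{T}{t_g}y_c,\theta_c\right).$$
   Context: Kinematics: $\dot x=\cos\theta$, $\dot y=\sin\theta$, $\dot\theta=u$, with state $(x,y,\theta)\in\mathbb{R}^2\times\mathbb{S}$ ($\mathbb{S}$ the circle of angles) and measurable control $u$. The MECP with duration $t_g$ from state $\boldsymbol z_c$: steer the system on a time interval of length $t_g$ from $\boldsymbol z_c$ to the final state $(0,0,-\pi/2)$ while minimizing $\int \tfrac12u^2\,dt$ over that interval. The optimal feedback control $u^*(t_g,\boldsymbol z_c)$ denotes the value at the initial time of the optimal control of the MECP starting at state $\boldsymbol z_c$ with time-to-go $t_g$; equivalently, along an optimal trajectory $\boldsymbol z(t)$ with optimal control $u(t)$ on $[0,t_f]$, $u^*(t_f-t,\boldsymbol z(t))=u(t)$ for all $t\in[0,t_f)$. *)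

theory Defs
  imports "HOL-Analysis.Analysis"
begin

text \<open>Kinematics x' = cos theta, y' = sin theta, theta' = u on [0,tg], state z = (x,y,theta).
  The angle is represented by a real number; the terminal angle condition is taken modulo 2 pi.
  Trajectories are the (absolutely continuous) solutions given in integral form.\<close>

definition theta_traj :: "real \<Rightarrow> (real \<Rightarrow> real) \<Rightarrow> real \<Rightarrow> real" where
  "theta_traj th0 u t = th0 + integral {0..t} u"

definition x_traj :: "real \<Rightarrow> real \<Rightarrow> (real \<Rightarrow> real) \<Rightarrow> real \<Rightarrow> real" where
  "x_traj x0 th0 u t = x0 + integral {0..t} (\<lambda>s. cos (theta_traj th0 u s))"

definition y_traj :: "real \<Rightarrow> real \<Rightarrow> (real \<Rightarrow> real) \<Rightarrow> real \<Rightarrow> real" where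
  "y_traj y0 th0 u t = y0 + integral {0..t} (\<lambda>s. sin (theta_traj th0 u s))"

definition admissible :: "real \<Rightarrow> real \<times> real \<times> real \<Rightarrow> (real \<Rightarrow> real) \<Rightarrow> bool" where
  "admissible tg z u \<longleftrightarrow> (case z of (x0, y0, th0) \<Rightarrow>
     u absolutely_integrable_on {0..tg} \<and>
     (\<lambda>t. (u t)\<^sup>2) integrable_on {0..tg} \<and>
     x_traj x0 th0 u tg = 0 \<and> y_traj y0 th0 u tg = 0 \<and>
     (\<exists>k::int. theta_traj th0 u tg = - pi / 2 + 2 * pi * of_int k))"

definition cost :: "real \<Rightarrow> (real \<Rightarrow> real) \<Rightarrow> real" where
  "cost tg u = integral {0..tg} (\<lambda>t. (u t)\<^sup>2 / 2)"

definition MECP_optimal :: "real \<Rightarrow> real \<times> real \<times> real \<Rightarrow> (real \<Rightarrow> real) \<Rightarrow> bool" where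
  "MECP_optimal tg z u \<longleftrightarrow> admissible tg z u \<and> (\<forall>w. admissible tg z w \<longrightarrow> cost tg u \<le> cost tg w)"

text \<open>v is a value of the optimal feedback u*(tg,z): the value at the initial time of an
  optimal control (taken as its right limit at 0, which is independent of the a.e. representative).
  Since optimal controls need not be unique, u* is treated as a relation.\<close>
definition feedback_value :: "real \<Rightarrow> real \<times> real \<times> real \<Rightarrow> real \<Rightarrow> bool" where
  "feedback_value tg z v \<longleftrightarrow> (\<exists>u. MECP_optimal tg z u \<and> (u \<longlongrightarrow> v) (at_right 0))"

end

theory Submission
  imports Defs
begin

lemma hi_scale:
  fixes f :: "real \<Rightarrow> real" assumes c: "c > 0"
  shows "((\<lambda>x. f (x / c)) has_integral (c * I)) {0..c*t} \<longleftrightarrow> (f has_integral I) {0..t}"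
proof -
  have "((\<lambda>x. f ((1/c) *\<^sub>R x + 0)) has_integral (I /\<^sub>R (1/c) ^ DIM(real)))
               (cbox ((0 - 0) /\<^sub>R (1/c)) ((t - 0) /\<^sub>R (1/c))) \<longleftrightarrow> (f has_integral I) (cbox 0 t)"
    by (rule has_integral_affinity_iff) (use c in simp)
  then show ?thesis using c by (simp add: cbox_interval mult.commute)
qed

lemma int_scale:
  fixes f :: "real \<Rightarrow> real" assumes c: "c > 0"
  shows "(\<lambda>x. f (x / c)) integrable_on {0..c*t} \<longleftrightarrow> f integrable_on {0..t}"
proof
  assume "(\<lambda>x. f (x / c)) integrable_on {0..c*t}"
  then obtain J where J: "((\<lambda>x. f (x / c)) has_integral J) {0..c*t}" by (auto simp: integrable_on_def)
  have "J = c * (J / c)" using c by simp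
  with J hi_scale[OF c, of f "J/c" t] show "f integrable_on {0..t}" by (auto simp: integrable_on_def)
next
  assume "f integrable_on {0..t}"
  then show "(\<lambda>x. f (x / c)) integrable_on {0..c*t}" using hi_scale[OF c] by (auto simp: integrable_on_def)
qed

lemma integral_scale:
  fixes f :: "real \<Rightarrow> real" assumes c: "c > 0"
  shows "integral {0..c*t} (\<lambda>x. f (x / c)) = c * integral {0..t} f"
proof (cases "f integrable_on {0..t}")
  case True
  then have "(f has_integral integral {0..t} f) {0..t}" by (rule integrable_integral)
  then have "((\<lambda>x. f (x / c)) has_integral (c * integral {0..t} f)) {0..c*t}"
    using hi_scale[OF c] by blast
  then show ?thesis by (rule integral_unique)
next
  case False
  then show ?thesis using int_scale[OF c, of f t] by (simp add: not_integrable_integral)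
qed

definition sc :: "real \<Rightarrow> (real \<Rightarrow> real) \<Rightarrow> real \<Rightarrow> real" where
  "sc c u = (\<lambda>s. u (s / c) / c)"

lemma theta_sc: assumes c: "c > 0"
  shows "theta_traj th (sc c u) s = theta_traj th u (s / c)"
proof -
  have e: "integral {0..c*(s/c)} (\<lambda>x. u (x / c)) = c * integral {0..s/c} u"
    by (rule integral_scale[OF c])
  have "integral {0..s} (sc c u) = (1/c) * integral {0..c*(s/c)} (\<lambda>x. u (x / c))"
    using c by (simp add: sc_def)
  also have "\<dots> = integral {0..s/c} u" using c by (simp only: e) simp
  finally show ?thesis by (simp add: theta_traj_def)
qed

lemma x_sc: assumes c: "c > 0"
  shows "x_traj (c*x) th (sc c u) (c*t) = c * x_traj x th u t"
proof -
  have "integral {0..c*t} (\<lambda>s. cos (theta_traj th (sc c u) s)) = integral {0..c*t} (\<lambda>s. cos (theta_traj th u (s/c)))"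
    using c by (simp add: theta_sc)
  also have "\<dots> = c * integral {0..t} (\<lambda>s. cos (theta_traj th u s))"
    using integral_scale[OF c, where f="\<lambda>s. cos (theta_traj th u s)"] by simp
  finally show ?thesis by (simp add: x_traj_def algebra_simps)
qed

lemma y_sc: assumes c: "c > 0"
  shows "y_traj (c*y) th (sc c u) (c*t) = c * y_traj y th u t"
proof -
  have "integral {0..c*t} (\<lambda>s. sin (theta_traj th (sc c u) s)) = integral {0..c*t} (\<lambda>s. sin (theta_traj th u (s/c)))"
    using c by (simp add: theta_sc)
  also have "\<dots> = c * integral {0..t} (\<lambda>s. sin (theta_traj th u s))"
    using integral_scale[OF c, where f="\<lambda>s. sin (theta_traj th u s)"] by simp
  finally show ?thesis by (simp add: y_traj_def algebra_simps)
qed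

lemma intble_sc: fixes g :: "real \<Rightarrow> real" assumes c: "c > 0"
  shows "(\<lambda>s. g (sc c u s)) integrable_on {0..c*t} \<longleftrightarrow> (\<lambda>s. g (u s / c)) integrable_on {0..t}"
  using int_scale[OF c, where f="\<lambda>s. g (u s / c)" and t=t] by (simp add: sc_def)

lemma cost_sc: assumes c: "c > 0"
  shows "cost (c*t) (sc c u) = cost t u / c"
proof -
  have "cost (c*t) (sc c u) = integral {0..c*t} (\<lambda>s. (1/c^2) * ((u (s/c))\<^sup>2 / 2))"
    unfolding cost_def sc_def by (simp add: power_divide)
  also have "\<dots> = (1/c^2) * (c * cost t u)"
    using integral_scale[OF c, where f="\<lambda>s. (u s)\<^sup>2 / 2" and t=t] by (simp add: cost_def)
  finally show ?thesis using c by (simp add: power2_eq_square)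
qed

lemma adm_sc: assumes c: "c > 0" and a: "admissible t (x, y, th) u"
  shows "admissible (c*t) (c*x, c*y, th) (sc c u)"
proof -
  have i1: "u integrable_on {0..t}" "(\<lambda>s. norm (u s)) integrable_on {0..t}" "(\<lambda>s. (u s)\<^sup>2) integrable_on {0..t}"
    using a by (auto simp: admissible_def absolutely_integrable_on_def)
  have "(\<lambda>s. u s / c) integrable_on {0..t}" using i1(1) by (simp add: integrable_on_divide)
  hence j1: "sc c u integrable_on {0..c*t}" using intble_sc[OF c, where g="\<lambda>x. x" and u=u and t=t] by simp
  have "(\<lambda>s. norm (u s) / c) integrable_on {0..t}" using i1(2) by (simp add: integrable_on_divide)
  hence "(\<lambda>s. norm (u s / c)) integrable_on {0..t}" using c by simp
  hence j2: "(\<lambda>s. norm (sc c u s)) integrable_on {0..c*t}" using intble_sc[OF c, where g=norm and u=u and t=t] by simp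
  have "(\<lambda>s. (u s)\<^sup>2 / c^2) integrable_on {0..t}" using i1(3) by (simp add: integrable_on_divide)
  hence "(\<lambda>s. (u s / c)\<^sup>2) integrable_on {0..t}" by (simp add: power_divide)
  hence j3: "(\<lambda>s. (sc c u s)\<^sup>2) integrable_on {0..c*t}" using intble_sc[OF c, where g="\<lambda>x. x\<^sup>2" and u=u and t=t] by simp
  obtain k :: int where k: "theta_traj th u t = - pi / 2 + 2 * pi * of_int k" using a by (auto simp: admissible_def)
  have "theta_traj th (sc c u) (c*t) = theta_traj th u t" using c by (simp add: theta_sc)
  with k j1 j2 j3 a show ?thesis
    by (auto simp: admissible_def absolutely_integrable_on_def x_sc[OF c] y_sc[OF c])
qed

lemma sc_inv: assumes c: "c > 0" shows "sc (1/c) (sc c u) = u"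
  using c by (simp add: sc_def fun_eq_iff)

lemma opt_sc: assumes c: "c > 0" and a: "MECP_optimal t (x, y, th) u"
  shows "MECP_optimal (c*t) (c*x, c*y, th) (sc c u)"
  unfolding MECP_optimal_def
proof safe
  show "admissible (c*t) (c*x, c*y, th) (sc c u)" using a c adm_sc by (auto simp: MECP_optimal_def)
next
  fix w assume w: "admissible (c*t) (c*x, c*y, th) w"
  have c1: "1/c > 0" using c by simp
  have "admissible ((1/c)*(c*t)) ((1/c)*(c*x), (1/c)*(c*y), th) (sc (1/c) w)"
    by (rule adm_sc[OF c1 w])
  hence "admissible t (x, y, th) (sc (1/c) w)" using c by simp
  hence "cost t u \<le> cost t (sc (1/c) w)" using a by (auto simp: MECP_optimal_def)
  also have "cost t (sc (1/c) w) = cost ((1/c)*(c*t)) (sc (1/c) w)" using c by simp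
  also have "\<dots> = cost (c*t) w / (1/c)" by (rule cost_sc[OF c1])
  also have "\<dots> = c * cost (c*t) w" by simp
  finally have "cost t u / c \<le> cost (c*t) w" using c by (simp add: field_simps)
  then show "cost (c*t) (sc c u) \<le> cost (c*t) w" using cost_sc[OF c] by simp
qed

lemma lim_sc: assumes c: "c > 0" and l: "(u \<longlongrightarrow> v) (at_right 0)"
  shows "(sc c u \<longlongrightarrow> v / c) (at_right 0)"
proof -
  have f: "filterlim (\<lambda>s. s / c) (at_right 0) (at_right 0)"
    using c by real_asymp
  have "((\<lambda>s. u (s / c)) \<longlongrightarrow> v) (at_right 0)" using filterlim_compose[OF l f] by simp
  then show ?thesis unfolding sc_def using c by (intro tendsto_intros) auto
qed

lemma fb_sc: assumes c: "c > 0" and "feedback_value t (x, y, th) v"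
  shows "feedback_value (c*t) (c*x, c*y, th) (v / c)"
  using assms opt_sc lim_sc unfolding feedback_value_def by blast

theorem lemma3:
  fixes xc yc thc tg T :: real
  assumes "tg > 0"
    and "\<exists>u. MECP_optimal tg (xc, yc, thc) u"
    and "T > 0"
  shows "\<forall>v. feedback_value tg (xc, yc, thc) v \<longleftrightarrow>
             feedback_value T (T / tg * xc, T / tg * yc, thc) (tg / T * v)"
proof (intro allI iffI)
  fix v
  have c: "T / tg > 0" "tg / T > 0" using assms by auto
  {
    assume "feedback_value tg (xc, yc, thc) v"
    from fb_sc[OF c(1) this]
    show "feedback_value T (T / tg * xc, T / tg * yc, thc) (tg / T * v)"
      using assms by (simp add: mult.commute)
  }
  {
    assume "feedback_value T (T / tg * xc, T / tg * yc, thc) (tg / T * v)"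
    from fb_sc[OF c(2) this]
    show "feedback_value tg (xc, yc, thc) v"
      using assms by simp
  }
qed

end
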